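(* For any positive integers $g$ and $k$, \[\sum_{S\in\mathcal{C}(k,g)}e_2(S)\le 2F_{g+k},\] where $F_n$ is the $n$-th Fibonacci number ($F_1=F_2=1$, $F_{n+2}=F_{n+1}+F_n$).
   Context: A numerical semigroup $S$ is a submonoid of $\mathbb{N}_0$ with finite complement; its genus is the size of the complement, $m(S)$ its smallest nonzero element, $F(S)$ the largest element of the complement, and $e(S)$ the size of the minimal generating set $(S\setminus\{0\})\setminus((S\setminus\{0\})+(S\setminus\{0\}))$. Define $e_1(S)=\#([m(S),2m(S)-1]\cap S)$ and $e_2(S)=e(S)-e_1(S)$. $\mathcal{C}(k,g)$ is the set of numerical semigroups $S$ of genus $g$ with $2m(S)<F(S)<3m(S)$ and $F(S)=2m(S)+k$. *)

theory Defs
  imports Main "HOL-Number_Theory.Fib"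
begin

definition numerical_semigroup :: "nat set \<Rightarrow> bool" where
  "numerical_semigroup S \<longleftrightarrow> 0 \<in> S \<and> (\<forall>a\<in>S. \<forall>b\<in>S. a + b \<in> S) \<and> finite (UNIV - S)"

definition genus :: "nat set \<Rightarrow> nat" where
  "genus S = card (UNIV - S)"

definition multiplicity :: "nat set \<Rightarrow> nat" where
  "multiplicity S = (LEAST x. x \<in> S \<and> x \<noteq> 0)"

text \<open>Frobenius number: largest element of the complement (only meaningful when genus > 0).\<close>
definition frobenius :: "nat set \<Rightarrow> nat" where
  "frobenius S = Max (UNIV - S)"

definition min_gens :: "nat set \<Rightarrow> nat set" where
  "min_gens S = (S - {0}) - {a + b | a b. a \<in> S - {0} \<and> b \<in> S - {0}}"

definition embdim :: "nat set \<Rightarrow> nat" where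
  "embdim S = card (min_gens S)"

definition e1 :: "nat set \<Rightarrow> nat" where
  "e1 S = card ({multiplicity S .. 2 * multiplicity S - 1} \<inter> S)"

definition e2 :: "nat set \<Rightarrow> int" where
  "e2 S = int (embdim S) - int (e1 S)"

definition C_set :: "nat \<Rightarrow> nat \<Rightarrow> nat set set" where
  "C_set k g = {S. numerical_semigroup S \<and> genus S = g
      \<and> 2 * multiplicity S < frobenius S \<and> frobenius S < 3 * multiplicity S
      \<and> frobenius S = 2 * multiplicity S + k}"

end

theory Submission
  imports Defs
begin

definition LS :: "nat \<Rightarrow> nat list set" where
  "LS n = {xs. set xs \<subseteq> {1,2} \<and> sum_list xs = n}"

definition LE :: "nat \<Rightarrow> nat list set" where
  "LE n = {xs. set xs \<subseteq> {1,2} \<and> sum_list xs \<le> n}"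

lemma length_le_sum12: "set xs \<subseteq> {1,2::nat} \<Longrightarrow> length xs \<le> sum_list xs"
  by (induction xs) auto

lemma finite_LE: "finite (LE n)"
proof -
  have "LE n \<subseteq> {xs. set xs \<subseteq> {1,2} \<and> length xs \<le> n}"
    unfolding LE_def using length_le_sum12 le_trans by blast
  moreover have "finite {xs. set xs \<subseteq> {1,2::nat} \<and> length xs \<le> n}"
    by (rule finite_lists_length_le) simp
  ultimately show ?thesis by (rule finite_subset)
qed

lemma LS_sub_LE: "LS n \<subseteq> LE n" unfolding LS_def LE_def by auto

lemma finite_LS: "finite (LS n)"
  using finite_subset[OF LS_sub_LE finite_LE] .

lemma sum0_nil: "set xs \<subseteq> {1,2::nat} \<Longrightarrow> sum_list xs = 0 \<Longrightarrow> xs = []"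
  by (metis le_zero_eq length_0_conv length_le_sum12)

lemma LS_0: "LS 0 = {[]}"
  unfolding LS_def using sum0_nil by auto

lemma LS_1: "LS 1 = {[1]}"
proof -
  have "xs = [1]" if "set xs \<subseteq> {1,2}" "sum_list xs = 1" for xs :: "nat list"
  proof (cases xs)
    case (Cons y ys)
    with that have "y = 1 \<or> y = 2" by auto
    with that Cons have "y = 1" "sum_list ys = 0" "set ys \<subseteq> {1,2}" by auto
    then show ?thesis using Cons sum0_nil[of ys] by auto
  next
    case Nil then show ?thesis using that by simp
  qed
  then show ?thesis unfolding LS_def by auto
qed

lemma LS_SS: "LS (Suc (Suc n)) = Cons 1 ` LS (Suc n) \<union> Cons 2 ` LS n"
proof
  show "LS (Suc (Suc n)) \<subseteq> Cons 1 ` LS (Suc n) \<union> Cons 2 ` LS n"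
  proof
    fix xs assume "xs \<in> LS (Suc (Suc n))"
    then have h: "set xs \<subseteq> {1,2}" "sum_list xs = Suc (Suc n)" unfolding LS_def by auto
    then obtain y ys where xs: "xs = y # ys" by (cases xs) auto
    with h have "y = 1 \<or> y = 2" by auto
    then show "xs \<in> Cons 1 ` LS (Suc n) \<union> Cons 2 ` LS n"
      using h xs unfolding LS_def by auto
  qed
next
  show "Cons 1 ` LS (Suc n) \<union> Cons 2 ` LS n \<subseteq> LS (Suc (Suc n))"
    unfolding LS_def by auto
qed

lemma card_LS: "card (LS n) = fib (Suc n)"
proof (induction n rule: fib.induct)
  case 1 then show ?case by (simp add: LS_0)
next
  case 2 then show ?case using LS_1 by simp
next
  case (3 n)
  have d: "Cons 1 ` LS (Suc n) \<inter> Cons 2 ` LS n = {}" by auto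
  have "card (LS (Suc (Suc n))) = card (Cons 1 ` LS (Suc n)) + card (Cons 2 ` LS n)"
    unfolding LS_SS by (rule card_Un_disjoint) (auto simp: finite_LS d)
  also have "\<dots> = card (LS (Suc n)) + card (LS n)"
    by (simp add: card_image)
  finally show ?case using 3 by simp
qed

lemma LE_Suc: "LE (Suc n) = LE n \<union> LS (Suc n)"
  unfolding LE_def LS_def by auto

lemma card_LE: "card (LE n) + 1 = fib (n + 3)"
proof (induction n)
  case 0
  have "LE 0 = {[]}" unfolding LE_def using sum0_nil by auto
  then show ?case by (simp add: numeral_3_eq_3)
next
  case (Suc n)
  have d: "LE n \<inter> LS (Suc n) = {}" unfolding LE_def LS_def by auto
  have "card (LE (Suc n)) = card (LE n) + card (LS (Suc n))"
    unfolding LE_Suc by (rule card_Un_disjoint) (auto simp: finite_LE finite_LS d)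
  then show ?case using Suc card_LS[of "Suc n"]
    by (simp add: numeral_3_eq_3)
qed

definition ok :: "nat \<Rightarrow> nat \<Rightarrow> nat \<Rightarrow> bool" where
  "ok k q v \<longleftrightarrow> (q < k \<longrightarrow> v \<in> {1,2,3}) \<and> (k < q \<longrightarrow> v \<in> {1,2}) \<and> (q = k \<longrightarrow> v = 3)"

definition single :: "nat \<Rightarrow> nat \<Rightarrow> nat \<Rightarrow> nat list" where
  "single k q v = (if q = k then [] else if q < k then (if v = 1 then [1,1] else [2, v - 1]) else [v])"

definition nonone :: "nat \<Rightarrow> nat \<Rightarrow> nat \<Rightarrow> nat list" where
  "nonone k q v = (if q < k then [v - 1] else [])"

definition blk :: "nat \<Rightarrow> (nat \<Rightarrow> nat) \<Rightarrow> nat \<Rightarrow> nat \<Rightarrow> nat list" where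
  "blk k f i j = (if j = k then single k (i - j) (f (i - j))
     else if i - j = k then single k j (f j)
     else if f j = 1 then 2 # nonone k (i - j) (f (i - j))
     else if f (i - j) = 1 then [1,1] @ nonone k j (f j)
     else [1,2] @ nonone k j (f j) @ nonone k (i - j) (f (i - j)))"

definition hdr :: "nat \<Rightarrow> nat \<Rightarrow> nat list" where
  "hdr p e = replicate p 1 @ [2, Suc e]"

definition rest :: "nat \<Rightarrow> (nat \<Rightarrow> nat) \<Rightarrow> nat \<Rightarrow> nat \<Rightarrow> nat list" where
  "rest k f a L = concat (map (\<lambda>q. single k q (f q)) [a..<Suc L])"

definition enc :: "nat \<Rightarrow> nat \<Rightarrow> (nat \<Rightarrow> nat) \<Rightarrow> nat \<Rightarrow> nat list" where
  "enc k L f i = hdr ((i - 1) div 2) ((i - 1) mod 2)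
     @ concat (map (blk k f i) [1..<Suc ((i - 1) div 2)])
     @ (if (i - 1) mod 2 = 1 then nonone k (Suc ((i - 1) div 2)) (f (Suc ((i - 1) div 2))) else [])
     @ nonone k i (f i) @ rest k f (Suc i) L"

definition valid :: "nat \<Rightarrow> nat \<Rightarrow> (nat \<Rightarrow> nat) \<Rightarrow> bool" where
  "valid k L f \<longleftrightarrow> 1 \<le> k \<and> k \<le> L \<and> (\<forall>q. 1 \<le> q \<and> q \<le> L \<longrightarrow> ok k q (f q))"

definition mark :: "nat \<Rightarrow> nat \<Rightarrow> (nat \<Rightarrow> nat) \<Rightarrow> nat \<Rightarrow> bool" where
  "mark k L f i \<longleftrightarrow> 1 \<le> i \<and> i \<le> L \<and> i \<noteq> k \<and> 2 \<le> f i \<and>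
     (\<forall>j. 1 \<le> j \<and> j < i \<longrightarrow> \<not> (f j = 1 \<and> f (i - j) = 1))"

lemma single_prefix:
  assumes "ok k q v" "ok k q v'" "single k q v @ r = single k q v' @ r'"
  shows "v = v' \<and> r = r'"
  using assms unfolding ok_def single_def by (auto split: if_splits)

lemma nonone_prefix:
  assumes "ok k q v" "ok k q v'" "2 \<le> v" "2 \<le> v'" "nonone k q v @ r = nonone k q v' @ r'"
  shows "v = v' \<and> r = r'"
  using assms unfolding ok_def nonone_def by (auto split: if_splits)

lemma ok_ge1: "ok k q v \<Longrightarrow> 1 \<le> v"
  unfolding ok_def by (cases "q < k"; cases "k < q") auto

lemma single_nonempty: "q \<noteq> k \<Longrightarrow> single k q v \<noteq> []"
  unfolding single_def by auto

lemma blk_prefix: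
  assumes "j < i - j"
    and o1: "ok k j (f j)" "ok k j (f' j)" "ok k (i - j) (f (i - j))" "ok k (i - j) (f' (i - j))"
    and n1: "\<not> (f j = 1 \<and> f (i - j) = 1)" "\<not> (f' j = 1 \<and> f' (i - j) = 1)"
    and eq: "blk k f i j @ r = blk k f' i j @ r'"
  shows "f j = f' j \<and> f (i - j) = f' (i - j) \<and> r = r'"
proof -
  have g1: "f j \<ge> 1" "f' j \<ge> 1" "f (i - j) \<ge> 1" "f' (i - j) \<ge> 1"
    using o1 ok_ge1 by blast+
  show ?thesis
  proof (cases "j = k")
    case True
    then have "i - j \<noteq> k" using assms(1) by auto
    have "f j = 3" "f' j = 3" using o1(1,2) True unfolding ok_def by auto
    moreover have "single k (i - j) (f (i - j)) @ r = single k (i - j) (f' (i - j)) @ r'"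
      using eq True unfolding blk_def by simp
    ultimately show ?thesis using single_prefix[OF o1(3,4)] by simp
  next
    case jk: False
    show ?thesis
    proof (cases "i - j = k")
      case True
      have "f (i - j) = 3" "f' (i - j) = 3" using o1(3,4) True unfolding ok_def by auto
      moreover have "single k j (f j) @ r = single k j (f' j) @ r'"
        using eq True jk unfolding blk_def by simp
      ultimately show ?thesis using single_prefix[OF o1(1,2)] by simp
    next
      case ijk: False
      have bk: "blk k g i j = (if g j = 1 then 2 # nonone k (i - j) (g (i - j))
           else if g (i - j) = 1 then 1 # 1 # nonone k j (g j)
           else 1 # 2 # nonone k j (g j) @ nonone k (i - j) (g (i - j)))" for g
        unfolding blk_def using jk ijk by simp
      consider (a) "f j = 1" "f' j = 1" | (b) "f j = 1" "f' j \<noteq> 1" | (c) "f j \<noteq> 1" "f' j = 1"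
        | (d) "f j \<noteq> 1" "f' j \<noteq> 1" by blast
      then show ?thesis
      proof cases
        case a
        then have "f (i - j) \<ge> 2" "f' (i - j) \<ge> 2" using n1 g1 by auto
        moreover have "nonone k (i - j) (f (i - j)) @ r = nonone k (i - j) (f' (i - j)) @ r'"
          using eq a unfolding bk by simp
        ultimately show ?thesis using a nonone_prefix[OF o1(3,4)] by simp
      next
        case b
        then have False using eq unfolding bk by (simp split: if_split_asm)
        then show ?thesis ..
      next
        case c
        then have False using eq unfolding bk by (simp split: if_split_asm)
        then show ?thesis ..
      next
        case d
        then have d2: "f j \<ge> 2" "f' j \<ge> 2" using g1 by auto
        consider (x) "f (i - j) = 1" "f' (i - j) = 1" | (y) "f (i - j) = 1" "f' (i - j) \<noteq> 1"
          | (z) "f (i - j) \<noteq> 1" "f' (i - j) = 1" | (w) "f (i - j) \<noteq> 1" "f' (i - j) \<noteq> 1" by blast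
        then show ?thesis
        proof cases
          case x
          then have "nonone k j (f j) @ r = nonone k j (f' j) @ r'"
            using eq d unfolding bk by simp
          then show ?thesis using x nonone_prefix[OF o1(1,2) d2] by simp
        next
          case y
          then have False using eq d unfolding bk by simp
          then show ?thesis ..
        next
          case z
          then have False using eq d unfolding bk by simp
          then show ?thesis ..
        next
          case w
          then have w2: "f (i - j) \<ge> 2" "f' (i - j) \<ge> 2" using g1 by auto
          have "nonone k j (f j) @ (nonone k (i - j) (f (i - j)) @ r) =
                nonone k j (f' j) @ (nonone k (i - j) (f' (i - j)) @ r')"
            using eq d w unfolding bk by simp
          then have "f j = f' j" and "nonone k (i - j) (f (i - j)) @ r = nonone k (i - j) (f' (i - j)) @ r'"
            using nonone_prefix[OF o1(1,2) d2] by simp_all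
          then show ?thesis using nonone_prefix[OF o1(3,4) w2] by simp
        qed
      qed
    qed
  qed
qed

lemma hdr_0: "hdr 0 e = [2, Suc e]" unfolding hdr_def by simp
lemma hdr_Suc: "hdr (Suc p) e = 1 # hdr p e" unfolding hdr_def by simp

lemma hdr_prefix:
  assumes "e \<le> 1" "e' \<le> 1" "hdr p e @ r = hdr p' e' @ r'"
  shows "p = p' \<and> e = e' \<and> r = r'"
  using assms(3)
proof (induction p arbitrary: p')
  case 0
  show ?case
  proof (cases p')
    case 0 then show ?thesis using "0.prems" by (simp add: hdr_0)
  next
    case (Suc q) then show ?thesis using "0.prems" by (simp add: hdr_0 hdr_Suc)
  qed
next
  case (Suc p)
  show ?case
  proof (cases p')
    case 0 then show ?thesis using Suc.prems by (simp add: hdr_0 hdr_Suc)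
  next
    case (Suc q)
    then have "hdr p e @ r = hdr q e' @ r'" using Suc.prems by (simp add: hdr_Suc)
    from Suc.IH[OF this] show ?thesis using Suc by simp
  qed
qed

lemma blocks_prefix:
  assumes "\<forall>j\<in>set js. j < i - j \<and> ok k j (f j) \<and> ok k j (f' j) \<and> ok k (i - j) (f (i - j))
      \<and> ok k (i - j) (f' (i - j)) \<and> \<not> (f j = 1 \<and> f (i - j) = 1) \<and> \<not> (f' j = 1 \<and> f' (i - j) = 1)"
    and "concat (map (blk k f i) js) @ r = concat (map (blk k f' i) js) @ r'"
  shows "(\<forall>j\<in>set js. f j = f' j \<and> f (i - j) = f' (i - j)) \<and> r = r'"
  using assms
proof (induction js arbitrary: r r')
  case Nil then show ?case by simp
next
  case (Cons j js)
  have "blk k f i j @ (concat (map (blk k f i) js) @ r) = blk k f' i j @ (concat (map (blk k f' i) js) @ r')"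
    using Cons.prems(2) by simp
  moreover have c: "j < i - j" "ok k j (f j)" "ok k j (f' j)" "ok k (i - j) (f (i - j))"
      "ok k (i - j) (f' (i - j))" "\<not> (f j = 1 \<and> f (i - j) = 1)" "\<not> (f' j = 1 \<and> f' (i - j) = 1)"
    using Cons.prems(1) by simp_all
  ultimately have h: "f j = f' j \<and> f (i - j) = f' (i - j)"
    "concat (map (blk k f i) js) @ r = concat (map (blk k f' i) js) @ r'"
    using blk_prefix[OF c] by simp_all
  have "\<forall>j\<in>set js. j < i - j \<and> ok k j (f j) \<and> ok k j (f' j) \<and> ok k (i - j) (f (i - j))
      \<and> ok k (i - j) (f' (i - j)) \<and> \<not> (f j = 1 \<and> f (i - j) = 1) \<and> \<not> (f' j = 1 \<and> f' (i - j) = 1)"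
    using Cons.prems(1) by simp
  from Cons.IH[OF this h(2)] h(1) show ?case by simp
qed

lemma rest_unfold: "rest k f a L = (if a \<le> L then single k a (f a) @ rest k f (Suc a) L else [])"
  unfolding rest_def by (cases "a \<le> L") (simp_all add: upt_conv_Cons del: upt_Suc)

lemma rest_inj:
  assumes "k \<le> L" "k \<le> L'" "\<forall>q. a \<le> q \<and> q \<le> L \<longrightarrow> ok k q (f q)"
    "\<forall>q. a \<le> q \<and> q \<le> L' \<longrightarrow> ok k q (f' q)" "rest k f a L = rest k f' a L'"
  shows "((a \<le> L \<or> a \<le> L') \<longrightarrow> L = L') \<and> (\<forall>q. a \<le> q \<and> q \<le> L \<longrightarrow> f q = f' q)"
  using assms
proof (induction "Suc (L + L') - a" arbitrary: a rule: less_induct)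
  case less
  show ?case
  proof (cases "a \<le> L \<or> a \<le> L'")
    case False then show ?thesis by auto
  next
    case True
    show ?thesis
    proof (cases "a \<le> L \<and> a \<le> L'")
      case both: True
      have u1: "rest k f a L = single k a (f a) @ rest k f (Suc a) L"
        using both by (subst rest_unfold) simp
      have u2: "rest k f' a L' = single k a (f' a) @ rest k f' (Suc a) L'"
        using both by (subst rest_unfold) simp
      have eqa: "single k a (f a) @ rest k f (Suc a) L = single k a (f' a) @ rest k f' (Suc a) L'"
        using less.prems(5) unfolding u1 u2 .
      have oka: "ok k a (f a)" "ok k a (f' a)" using less.prems(3,4) both by simp_all
      from single_prefix[OF oka eqa]
      have hh: "f a = f' a \<and> rest k f (Suc a) L = rest k f' (Suc a) L'" .
      then have h: "f a = f' a" "rest k f (Suc a) L = rest k f' (Suc a) L'" by simp_all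
      have lt: "Suc (L + L') - Suc a < Suc (L + L') - a" using both by arith
      have p3: "\<forall>q. Suc a \<le> q \<and> q \<le> L \<longrightarrow> ok k q (f q)" using less.prems(3) by simp
      have p4: "\<forall>q. Suc a \<le> q \<and> q \<le> L' \<longrightarrow> ok k q (f' q)" using less.prems(4) by simp
      have ih: "((Suc a \<le> L \<or> Suc a \<le> L') \<longrightarrow> L = L') \<and> (\<forall>q. Suc a \<le> q \<and> q \<le> L \<longrightarrow> f q = f' q)"
        by (rule less.hyps[OF lt less.prems(1,2) p3 p4 h(2)])
      have "L = L'"
      proof (rule ccontr)
        assume "L \<noteq> L'"
        then have "Suc a \<le> L \<or> Suc a \<le> L'" using both by auto
        then show False using ih \<open>L \<noteq> L'\<close> by auto
      qed
      moreover have "\<forall>q. a \<le> q \<and> q \<le> L \<longrightarrow> f q = f' q"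
      proof (intro allI impI)
        fix q assume q: "a \<le> q \<and> q \<le> L"
        show "f q = f' q"
        proof (cases "q = a")
          case True then show ?thesis using h(1) by simp
        next
          case False then have "Suc a \<le> q \<and> q \<le> L" using q by simp
          then show ?thesis using ih by blast
        qed
      qed
      ultimately show ?thesis by auto
    next
      case False
      show ?thesis
      proof (cases "a \<le> L")
        case True
        with False have "L' < a" by auto
        then have "a \<noteq> k" using less.prems(2) by auto
        have "rest k f a L \<noteq> []" using True single_nonempty[OF \<open>a \<noteq> k\<close>]
          by (subst rest_unfold) simp
        moreover have "rest k f' a L' = []" using \<open>L' < a\<close> by (subst rest_unfold) simp
        ultimately show ?thesis using less.prems(5) by simp
      next
        case nL: False
        with True have "a \<le> L'" "L < a" by auto
        then have "a \<noteq> k" using less.prems(1) by auto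
        have "rest k f' a L' \<noteq> []" using \<open>a \<le> L'\<close> single_nonempty[OF \<open>a \<noteq> k\<close>]
          by (subst rest_unfold) simp
        moreover have "rest k f a L = []" using \<open>L < a\<close> by (subst rest_unfold) simp
        ultimately show ?thesis using less.prems(5) by simp
      qed
    qed
  qed
qed

lemma enc_inj:
  assumes v: "valid k L f" "valid k L' f'" and m: "mark k L f i" "mark k L' f' i'"
    and eq: "enc k L f i = enc k L' f' i'"
  shows "i = i' \<and> L = L' \<and> (\<forall>q. 1 \<le> q \<and> q \<le> L \<longrightarrow> f q = f' q)"
proof -
  define p where "p = (i - 1) div 2"
  define e where "e = (i - 1) mod 2"
  define p' where "p' = (i' - 1) div 2"
  define e' where "e' = (i' - 1) mod 2"
  have i1: "1 \<le> i" "i \<le> L" "i \<noteq> k" "2 \<le> f i"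
    and P: "\<forall>j. 1 \<le> j \<and> j < i \<longrightarrow> \<not> (f j = 1 \<and> f (i - j) = 1)"
    using m(1) unfolding mark_def by auto
  have i1': "1 \<le> i'" "i' \<le> L'" "i' \<noteq> k" "2 \<le> f' i'"
    and P': "\<forall>j. 1 \<le> j \<and> j < i' \<longrightarrow> \<not> (f' j = 1 \<and> f' (i' - j) = 1)"
    using m(2) unfolding mark_def by auto
  have vk: "1 \<le> k" "k \<le> L" "\<forall>q. 1 \<le> q \<and> q \<le> L \<longrightarrow> ok k q (f q)"
    using v(1) unfolding valid_def by auto
  have vk': "1 \<le> k" "k \<le> L'" "\<forall>q. 1 \<le> q \<and> q \<le> L' \<longrightarrow> ok k q (f' q)"
    using v(2) unfolding valid_def by auto
  have ie: "i = 2 * p + e + 1" "e \<le> 1" using i1(1) unfolding p_def e_def by auto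
  have ie': "i' = 2 * p' + e' + 1" "e' \<le> 1" using i1'(1) unfolding p'_def e'_def by auto
  define X where "X = concat (map (blk k f i) [1..<Suc p])
     @ (if e = 1 then nonone k (Suc p) (f (Suc p)) else []) @ nonone k i (f i) @ rest k f (Suc i) L"
  define X' where "X' = concat (map (blk k f' i') [1..<Suc p'])
     @ (if e' = 1 then nonone k (Suc p') (f' (Suc p')) else []) @ nonone k i' (f' i') @ rest k f' (Suc i') L'"
  have "hdr p e @ X = hdr p' e' @ X'"
    using eq unfolding enc_def X_def X'_def p_def e_def p'_def e'_def by simp
  from hdr_prefix[OF ie(2) ie'(2) this] have h1: "p = p'" "e = e'" "X = X'" by simp_all
  have ii: "i = i'" using ie ie' h1 by simp
  define Y where "Y = (if e = 1 then nonone k (Suc p) (f (Suc p)) else []) @ nonone k i (f i) @ rest k f (Suc i) L"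
  define Y' where "Y' = (if e = 1 then nonone k (Suc p) (f' (Suc p)) else []) @ nonone k i (f' i) @ rest k f' (Suc i) L'"
  have eqX: "concat (map (blk k f i) [1..<Suc p]) @ Y = concat (map (blk k f' i) [1..<Suc p]) @ Y'"
    using h1 ii unfolding X_def X'_def Y_def Y'_def by simp
  have bc: "\<forall>j\<in>set [1..<Suc p]. j < i - j \<and> ok k j (f j) \<and> ok k j (f' j) \<and> ok k (i - j) (f (i - j))
      \<and> ok k (i - j) (f' (i - j)) \<and> \<not> (f j = 1 \<and> f (i - j) = 1) \<and> \<not> (f' j = 1 \<and> f' (i - j) = 1)"
  proof
    fix j assume "j \<in> set [1..<Suc p]"
    then have j: "1 \<le> j" "j \<le> p" by auto
    then have j2: "j < i - j" "i - j \<le> L" "i - j \<le> L'" "1 \<le> i - j" "j \<le> L" "j \<le> L'" "j < i"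
      using ie i1 i1' ii by auto
    show "j < i - j \<and> ok k j (f j) \<and> ok k j (f' j) \<and> ok k (i - j) (f (i - j))
      \<and> ok k (i - j) (f' (i - j)) \<and> \<not> (f j = 1 \<and> f (i - j) = 1) \<and> \<not> (f' j = 1 \<and> f' (i - j) = 1)"
    proof (intro conjI)
      show "j < i - j" by (rule j2(1))
      show "ok k j (f j)" using vk(3)[rule_format, of j] j j2 by simp
      show "ok k j (f' j)" using vk'(3)[rule_format, of j] j j2 by simp
      show "ok k (i - j) (f (i - j))" using vk(3)[rule_format, of "i - j"] j2 by simp
      show "ok k (i - j) (f' (i - j))" using vk'(3)[rule_format, of "i - j"] j2 by simp
      show "\<not> (f j = 1 \<and> f (i - j) = 1)" using P[rule_format, of j] j j2 by simp
      show "\<not> (f' j = 1 \<and> f' (i - j) = 1)" using P'[rule_format, of j] j j2 ii by simp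
    qed
  qed
  from blocks_prefix[OF bc eqX]
  have h2: "\<forall>j\<in>set [1..<Suc p]. f j = f' j \<and> f (i - j) = f' (i - j)" "Y = Y'" by simp_all
  define Z where "Z = nonone k i (f i) @ rest k f (Suc i) L"
  define Z' where "Z' = nonone k i (f' i) @ rest k f' (Suc i) L'"
  have h3: "(e = 1 \<longrightarrow> f (Suc p) = f' (Suc p)) \<and> Z = Z'"
  proof (cases "e = 1")
    case True
    have sp: "1 \<le> Suc p" "Suc p < i" "i - Suc p = Suc p" "Suc p \<le> L" "Suc p \<le> L'"
      using ie True i1 i1' ii by auto
    have o: "ok k (Suc p) (f (Suc p))" "ok k (Suc p) (f' (Suc p))"
      using sp vk(3)[rule_format, of "Suc p"] vk'(3)[rule_format, of "Suc p"] by auto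
    have "f (Suc p) \<noteq> 1" "f' (Suc p) \<noteq> 1" using P[rule_format, of "Suc p"] P'[rule_format, of "Suc p"] sp ii by auto
    then have g: "2 \<le> f (Suc p)" "2 \<le> f' (Suc p)" using ok_ge1[OF o(1)] ok_ge1[OF o(2)] by auto
    have "nonone k (Suc p) (f (Suc p)) @ Z = nonone k (Suc p) (f' (Suc p)) @ Z'"
      using h2(2) True unfolding Y_def Y'_def Z_def Z'_def by simp
    from nonone_prefix[OF o g this] show ?thesis by simp
  next
    case False
    then show ?thesis using h2(2) unfolding Y_def Y'_def Z_def Z'_def by simp
  qed
  have oi: "ok k i (f i)" "ok k i (f' i)" using vk(3)[rule_format, of i] vk'(3)[rule_format, of i] i1 i1' ii by auto
  have "nonone k i (f i) @ rest k f (Suc i) L = nonone k i (f' i) @ rest k f' (Suc i) L'"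
    using h3 unfolding Z_def Z'_def by simp
  from nonone_prefix[OF oi i1(4) _ this] i1'(4) ii
  have h4: "f i = f' i" "rest k f (Suc i) L = rest k f' (Suc i) L'" by simp_all
  have r3: "\<forall>q. Suc i \<le> q \<and> q \<le> L \<longrightarrow> ok k q (f q)" using vk(3) i1 by auto
  have r4: "\<forall>q. Suc i \<le> q \<and> q \<le> L' \<longrightarrow> ok k q (f' q)" using vk'(3) i1 by auto
  note rr = rest_inj[OF vk(2) vk'(2) r3 r4 h4(2)]
  have h5: "(Suc i \<le> L \<or> Suc i \<le> L') \<longrightarrow> L = L'" "\<forall>q. Suc i \<le> q \<and> q \<le> L \<longrightarrow> f q = f' q"
    using conjunct1[OF rr] conjunct2[OF rr] by fast+
  have LL: "L = L'"
  proof (cases "Suc i \<le> L \<or> Suc i \<le> L'")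
    case True then show ?thesis using h5(1) by simp
  next
    case False then show ?thesis using i1(2) i1'(2) ii by simp
  qed
  have agree: "f q = f' q" if q: "1 \<le> q" "q \<le> L" for q
  proof -
    consider (a) "q \<le> p" | (b) "e = 1" "q = Suc p" | (c) "p < q" "q < i" "\<not> (e = 1 \<and> q = Suc p)"
      | (d) "q = i" | (f) "i < q" by linarith
    then show ?thesis
    proof cases
      case a then show ?thesis using h2(1) q by auto
    next
      case b then show ?thesis using h3 by simp
    next
      case c
      then have "1 \<le> i - q" "i - q \<le> p" using ie by auto
      then have "i - q \<in> set [1..<Suc p]" unfolding set_upt by simp
      then have "f (i - (i - q)) = f' (i - (i - q))" using h2(1) by blast
      moreover have "i - (i - q) = q" using c by simp
      ultimately show ?thesis by simp
    next
      case d then show ?thesis using h4(1) by simp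
    next
      case f then show ?thesis using h5(2) q by simp
    qed
  qed
  show ?thesis using ii LL agree by blast
qed

definition bud :: "nat \<Rightarrow> (nat \<Rightarrow> nat) \<Rightarrow> nat \<Rightarrow> nat" where
  "bud k f q = (if q = k then 0 else if q < k then f q + 1 else f q)"

lemma sum_list_concat_map: "sum_list (concat (map g xs)) = sum_list (map (\<lambda>x. sum_list (g x)) xs)"
  by (induction xs) auto

lemma sum_single: "ok k q v \<Longrightarrow> sum_list (single k q v) = (if q = k then 0 else if q < k then v + 1 else v)"
  unfolding ok_def single_def by (cases "q < k"; cases "k < q") auto

lemma sum_single_bud: "ok k q (f q) \<Longrightarrow> sum_list (single k q (f q)) = bud k f q"
  unfolding bud_def by (simp add: sum_single)

lemma sum_nonone: "ok k q v \<Longrightarrow> 2 \<le> v \<Longrightarrow> q \<noteq> k \<Longrightarrow>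
    sum_list (nonone k q v) + 2 = (if q < k then v + 1 else v)"
  unfolding ok_def nonone_def by (cases "q < k"; cases "k < q") auto

lemma sum_nonone_bud: "ok k q (f q) \<Longrightarrow> 2 \<le> f q \<Longrightarrow> q \<noteq> k \<Longrightarrow>
    sum_list (nonone k q (f q)) + 2 = bud k f q"
  unfolding bud_def using sum_nonone[of k q "f q"] by simp

lemma nonone_k: "nonone k k v = []" unfolding nonone_def by simp

lemma bud_ge1: "ok k q (f q) \<Longrightarrow> q \<noteq> k \<Longrightarrow> 1 \<le> bud k f q"
  unfolding bud_def using ok_ge1[of k q "f q"] by auto

lemma sum_blk:
  assumes "j < i - j"
    and o1: "ok k j (f j)" "ok k (i - j) (f (i - j))"
    and n1: "\<not> (f j = 1 \<and> f (i - j) = 1)"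
  shows "sum_list (blk k f i j) + (if j = k \<or> i - j = k then 0 else 1) \<le> bud k f j + bud k f (i - j)"
proof -
  have g1: "f j \<ge> 1" "f (i - j) \<ge> 1" using o1 ok_ge1 by blast+
  show ?thesis
  proof (cases "j = k")
    case True
    then have "i - j \<noteq> k" using assms(1) by auto
    then show ?thesis using True sum_single_bud[of k "i - j" f, OF o1(2)] unfolding blk_def by (simp add: bud_def)
  next
    case jk: False
    show ?thesis
    proof (cases "i - j = k")
      case True
      then show ?thesis using jk sum_single_bud[of k j f, OF o1(1)] unfolding blk_def by (simp add: bud_def)
    next
      case ijk: False
      have bk: "blk k f i j = (if f j = 1 then 2 # nonone k (i - j) (f (i - j))
           else if f (i - j) = 1 then 1 # 1 # nonone k j (f j)
           else 1 # 2 # nonone k j (f j) @ nonone k (i - j) (f (i - j)))"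
        unfolding blk_def using jk ijk by simp
      have b1: "1 \<le> bud k f j" using bud_ge1[of k j f, OF o1(1) jk] .
      have b2: "1 \<le> bud k f (i - j)" using bud_ge1[of k "i - j" f, OF o1(2) ijk] .
      consider (a) "f j = 1" | (b) "f j \<noteq> 1" "f (i - j) = 1" | (c) "f j \<noteq> 1" "f (i - j) \<noteq> 1" by blast
      then show ?thesis
      proof cases
        case a
        then have "2 \<le> f (i - j)" using n1 g1 by auto
        from sum_nonone_bud[of k "i - j" f, OF o1(2) this ijk] show ?thesis using a jk ijk b1 unfolding bk by simp
      next
        case b
        then have "2 \<le> f j" using g1 by auto
        from sum_nonone_bud[of k j f, OF o1(1) this jk] show ?thesis using b jk ijk b2 unfolding bk by simp
      next
        case c
        then have "2 \<le> f j" "2 \<le> f (i - j)" using g1 by auto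
        from sum_nonone_bud[of k j f, OF o1(1) this(1) jk] sum_nonone_bud[of k "i - j" f, OF o1(2) this(2) ijk]
        show ?thesis using c jk ijk unfolding bk by simp
      qed
    qed
  qed
qed

lemma sum_rest:
  assumes "\<forall>q. a \<le> q \<and> q \<le> L \<longrightarrow> ok k q (f q)"
  shows "sum_list (rest k f a L) = sum (bud k f) {a..L}"
proof -
  have "sum_list (rest k f a L) = sum_list (map (\<lambda>q. sum_list (single k q (f q))) [a..<Suc L])"
    unfolding rest_def sum_list_concat_map ..
  also have "\<dots> = sum (\<lambda>q. sum_list (single k q (f q))) {a..<Suc L}"
    by (simp add: interv_sum_list_conv_sum_set_nat del: upt_Suc)
  also have "\<dots> = sum (bud k f) {a..<Suc L}"
  proof (rule sum.cong)
    fix q assume "q \<in> {a..<Suc L}"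
    then have "ok k q (f q)" using assms by auto
    then show "sum_list (single k q (f q)) = bud k f q" by (rule sum_single_bud)
  qed simp
  finally show ?thesis by (simp add: atLeastLessThanSuc_atLeastAtMost)
qed

lemma bud_total:
  assumes "valid k L f"
  shows "sum f {1..L} + k = sum (bud k f) {1..L} + 4"
proof -
  have k: "1 \<le> k" "k \<le> L" "f k = 3"
    using assms unfolding valid_def ok_def by auto
  have sp: "{1..L} = {1..<k} \<union> {k..L}" using k by auto
  have d: "{1..<k} \<inter> {k..L} = {}" by auto
  have s1: "sum f {1..L} = sum f {1..<k} + sum f {k..L}"
    unfolding sp by (rule sum.union_disjoint) (use d in auto)
  have s2: "sum (bud k f) {1..L} = sum (bud k f) {1..<k} + sum (bud k f) {k..L}"
    unfolding sp by (rule sum.union_disjoint) (use d in auto)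
  have s3: "sum (bud k f) {1..<k} = sum f {1..<k} + (k - 1)"
  proof -
    have "sum (bud k f) {1..<k} = sum (\<lambda>q. f q + 1) {1..<k}"
      by (rule sum.cong) (auto simp: bud_def)
    also have "\<dots> = sum f {1..<k} + sum (\<lambda>q. 1) {1..<k}" by (rule sum.distrib)
    also have "\<dots> = sum f {1..<k} + (k - 1)" by simp
    finally show ?thesis .
  qed
  have ins: "{k..L} = insert k {Suc k..L}" using k by auto
  have s4: "sum (bud k f) {k..L} = sum f {Suc k..L}"
  proof -
    have "sum (bud k f) {k..L} = bud k f k + sum (bud k f) {Suc k..L}"
      unfolding ins by (rule sum.insert) auto
    also have "sum (bud k f) {Suc k..L} = sum f {Suc k..L}"
      by (rule sum.cong) (auto simp: bud_def)
    finally show ?thesis by (simp add: bud_def)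
  qed
  have s5: "sum f {k..L} = 3 + sum f {Suc k..L}"
    unfolding ins using k by (subst sum.insert) auto
  show ?thesis using s1 s2 s3 s4 s5 k by simp
qed

lemma pairs_sum:
  assumes "i = 2 * p + e + 1" "e \<le> 1"
  shows "sum h {1..<i} = sum (\<lambda>j. h j + h (i - j)) {1..p} + (if e = 1 then h (Suc p) else 0)"
proof -
  have sp: "{1..<i} = {1..p} \<union> {Suc p..<i}" using assms by auto
  have a: "sum h {1..<i} = sum h {1..p} + sum h {Suc p..<i}"
    unfolding sp by (rule sum.union_disjoint) auto
  have b: "sum h {Suc p..<i} = (if e = 1 then h (Suc p) else 0) + sum h {Suc p + e..<i}"
  proof (cases "e = 1")
    case True
    have "{Suc p..<i} = insert (Suc p) {Suc p + e..<i}" using True assms by auto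
    then show ?thesis using True by simp
  next
    case False
    then have "e = 0" using assms by simp
    then show ?thesis by simp
  qed
  have c: "sum h {Suc p + e..<i} = sum (\<lambda>j. h (i - j)) {1..p}"
    by (rule sum.reindex_bij_witness[of _ "\<lambda>q. i - q" "\<lambda>j. i - j"]) (use assms in auto)
  show ?thesis using a b c by (simp add: sum.distrib ac_simps)
qed

lemma dd_sum:
  assumes "i = 2 * p + e + 1" "e \<le> 1"
  shows "p \<le> sum (\<lambda>j. if j = k \<or> i - j = k then 0 else 1) {1..p} + 1"
    and "e = 1 \<Longrightarrow> Suc p = k \<Longrightarrow> sum (\<lambda>j. if j = k \<or> i - j = k then 0 else 1) {1..p} = (p::nat)"
proof -
  define B where "B = {j \<in> {1..p}. j = k \<or> i - j = k}"
  define dd where "dd = (\<lambda>j. if j = k \<or> i - j = k then 0 else (1::nat))"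
  have B1: "B \<subseteq> {if k \<le> p then k else i - k}" unfolding B_def using assms by auto
  then have cB: "card B \<le> 1" using card_mono[OF _ B1] by simp
  have fin: "finite B" using B1 by (rule finite_subset) simp
  have "sum dd {1..p} = sum dd ({1..p} - B) + sum dd B"
    by (rule sum.subset_diff) (auto simp: B_def)
  also have "sum dd B = 0" by (rule sum.neutral) (auto simp: B_def dd_def)
  also have "sum dd ({1..p} - B) = card ({1..p} - B)"
    by (simp add: dd_def B_def)
  also have "card ({1..p} - B) = p - card B"
    by (subst card_Diff_subset) (auto simp: B_def fin)
  finally have e1: "sum dd {1..p} = p - card B" by simp
  show "p \<le> sum (\<lambda>j. if j = k \<or> i - j = k then 0 else 1) {1..p} + 1"
    using e1 cB unfolding dd_def by simp
  assume "e = 1" "Suc p = k"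
  then have "B = {}" unfolding B_def using assms by auto
  then show "sum (\<lambda>j. if j = k \<or> i - j = k then 0 else 1) {1..p} = (p::nat)"
    using e1 unfolding dd_def by simp
qed

lemma enc_weight:
  assumes v: "valid k L f" and m: "mark k L f i"
  shows "sum_list (enc k L f i) + 2 \<le> sum f {1..L} + k"
proof -
  define p where "p = (i - 1) div 2"
  define e where "e = (i - 1) mod 2"
  have i1: "1 \<le> i" "i \<le> L" "i \<noteq> k" "2 \<le> f i"
    and P: "\<forall>j. 1 \<le> j \<and> j < i \<longrightarrow> \<not> (f j = 1 \<and> f (i - j) = 1)"
    using m unfolding mark_def by auto
  have vk: "1 \<le> k" "k \<le> L" "\<forall>q. 1 \<le> q \<and> q \<le> L \<longrightarrow> ok k q (f q)"
    using v unfolding valid_def by auto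
  have ie: "i = 2 * p + e + 1" "e \<le> 1" using i1(1) unfolding p_def e_def by auto
  define dd where "dd = (\<lambda>j. if j = k \<or> i - j = k then 0 else (1::nat))"
  define Sb where "Sb = sum (\<lambda>j. bud k f j + bud k f (i - j)) {1..p}"
  define Bl where "Bl = sum (\<lambda>j. sum_list (blk k f i j)) {1..p}"
  define mid where "mid = (if e = 1 then nonone k (Suc p) (f (Suc p)) else [])"
  have e1: "enc k L f i = hdr p e @ concat (map (blk k f i) [1..<Suc p]) @ mid @ nonone k i (f i) @ rest k f (Suc i) L"
    unfolding enc_def p_def e_def mid_def by simp
  have hs: "sum_list (hdr p e) = p + 3 + e" unfolding hdr_def by (simp add: sum_list_replicate)
  have bs: "sum_list (concat (map (blk k f i) [1..<Suc p])) = Bl"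
    unfolding sum_list_concat_map Bl_def
    by (simp add: interv_sum_list_conv_sum_set_nat atLeastLessThanSuc_atLeastAtMost del: upt_Suc)
  have oq: "ok k q (f q)" if "1 \<le> q" "q \<le> L" for q using vk(3) that by blast
  have blk_le: "Bl + sum dd {1..p} \<le> Sb"
  proof -
    have "sum (\<lambda>j. sum_list (blk k f i j) + dd j) {1..p} \<le> Sb"
      unfolding Sb_def
    proof (rule sum_mono)
      fix j assume j: "j \<in> {1..p}"
      then have j2: "j < i - j" "1 \<le> j" "j \<le> L" "1 \<le> i - j" "i - j \<le> L" "j < i"
        using ie i1 by auto
      have n: "\<not> (f j = 1 \<and> f (i - j) = 1)" using P j2 by blast
      show "sum_list (blk k f i j) + dd j \<le> bud k f j + bud k f (i - j)"
        unfolding dd_def by (rule sum_blk[OF j2(1) oq[OF j2(2,3)] oq[OF j2(4,5)] n])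
    qed
    then show ?thesis unfolding Bl_def by (simp add: sum.distrib)
  qed
  have ms: "sum_list (nonone k i (f i)) + 2 = bud k f i"
    by (rule sum_nonone_bud[of k i f, OF oq[OF i1(1,2)] i1(4) i1(3)])
  have rs: "sum_list (rest k f (Suc i) L) = sum (bud k f) {Suc i..L}"
    by (rule sum_rest) (use vk(3) i1 in auto)
  have tot: "sum f {1..L} + k = sum (bud k f) {1..L} + 4" by (rule bud_total[OF v])
  have sp: "sum (bud k f) {1..L} = sum (bud k f) {1..<i} + bud k f i + sum (bud k f) {Suc i..L}"
  proof -
    have u: "{1..L} = {1..<i} \<union> {i..L}" "{i..L} = insert i {Suc i..L}" using i1 by auto
    have "sum (bud k f) {1..L} = sum (bud k f) {1..<i} + sum (bud k f) {i..L}"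
      unfolding u(1) by (rule sum.union_disjoint) auto
    also have "sum (bud k f) {i..L} = bud k f i + sum (bud k f) {Suc i..L}"
      unfolding u(2) by (rule sum.insert) auto
    finally show ?thesis by simp
  qed
  have ps: "sum (bud k f) {1..<i} = Sb + (if e = 1 then bud k f (Suc p) else 0)"
    unfolding Sb_def by (rule pairs_sum[OF ie])
  have dd1: "p \<le> sum dd {1..p} + 1" unfolding dd_def by (rule dd_sum(1)[OF ie])
  have total: "sum_list (enc k L f i) = p + 3 + e + Bl + sum_list mid + sum_list (nonone k i (f i))
      + sum (bud k f) {Suc i..L}"
    unfolding e1 using hs bs rs by simp
  show ?thesis
  proof (cases "e = 1")
    case False
    then have "mid = []" unfolding mid_def by simp
    moreover have "e = 0" using False ie by simp
    ultimately show ?thesis using total blk_le ms tot sp ps dd1 by simp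
  next
    case True
    show ?thesis
    proof (cases "Suc p = k")
      case True
      have "sum_list mid = 0" unfolding mid_def using True by (simp add: nonone_k)
      moreover have "sum dd {1..p} = p" unfolding dd_def by (rule dd_sum(2)[OF ie \<open>e = 1\<close> True])
      moreover have "bud k f (Suc p) = 0" using True by (simp add: bud_def)
      ultimately show ?thesis using total blk_le ms tot sp ps \<open>e = 1\<close> by linarith
    next
      case False
      have sp1: "1 \<le> Suc p" "Suc p \<le> L" "Suc p < i" "i - Suc p = Suc p" using ie \<open>e = 1\<close> i1 by auto
      have "f (Suc p) \<noteq> 1" using P sp1 by auto
      then have "2 \<le> f (Suc p)" using ok_ge1[OF oq[OF sp1(1,2)]] by simp
      from sum_nonone_bud[of k "Suc p" f, OF oq[OF sp1(1,2)] this False]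
      have "sum_list mid + 2 = bud k f (Suc p)" unfolding mid_def using \<open>e = 1\<close> by simp
      moreover have "sum (bud k f) {1..<i} = Sb + bud k f (Suc p)" using ps \<open>e = 1\<close> by simp
      ultimately show ?thesis using total blk_le ms tot sp dd1 \<open>e = 1\<close> by linarith
    qed
  qed
qed

lemma set_single: "ok k q v \<Longrightarrow> set (single k q v) \<subseteq> {1,2}"
  unfolding ok_def single_def by (cases "q < k"; cases "k < q") auto

lemma set_nonone: "ok k q v \<Longrightarrow> 2 \<le> v \<Longrightarrow> set (nonone k q v) \<subseteq> {1,2}"
  unfolding ok_def nonone_def by (cases "q < k"; cases "k < q") auto

lemma set_blk:
  assumes "j < i - j"
    and o1: "ok k j (f j)" "ok k (i - j) (f (i - j))"
    and n1: "\<not> (f j = 1 \<and> f (i - j) = 1)"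
  shows "set (blk k f i j) \<subseteq> {1,2}"
proof -
  have g1: "f j \<ge> 1" "f (i - j) \<ge> 1" using o1 ok_ge1 by blast+
  have s1: "set (single k j (f j)) \<subseteq> {1,2}" "set (single k (i - j) (f (i - j))) \<subseteq> {1,2}"
    using set_single o1 by blast+
  have s2: "set (nonone k j (f j)) \<subseteq> {1,2}" if "f j \<noteq> 1"
    using set_nonone[of k j "f j"] o1(1) g1 that by simp
  have s3: "set (nonone k (i - j) (f (i - j))) \<subseteq> {1,2}" if "f (i - j) \<noteq> 1"
    using set_nonone[of k "i - j" "f (i - j)"] o1(2) g1 that by simp
  show ?thesis
  proof (cases "j = k")
    case True
    then have "blk k f i j = single k (i - j) (f (i - j))" unfolding blk_def by simp
    then show ?thesis using s1 by simp
  next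
    case jk: False
    show ?thesis
    proof (cases "i - j = k")
      case True
      then have "blk k f i j = single k j (f j)" unfolding blk_def using jk by simp
      then show ?thesis using s1 by simp
    next
      case False
      have bk: "blk k f i j = (if f j = 1 then 2 # nonone k (i - j) (f (i - j))
           else if f (i - j) = 1 then 1 # 1 # nonone k j (f j)
           else 1 # 2 # nonone k j (f j) @ nonone k (i - j) (f (i - j)))"
        unfolding blk_def using jk False by simp
      show ?thesis unfolding bk using s2 s3 n1 by auto
    qed
  qed
qed

lemma set_rest:
  assumes "\<forall>q. a \<le> q \<and> q \<le> L \<longrightarrow> ok k q (f q)"
  shows "set (rest k f a L) \<subseteq> {1,2}"
proof -
  have "set (single k q (f q)) \<subseteq> {1,2}" if "q \<in> set [a..<Suc L]" for q
    using that assms set_single[of k q "f q"] by auto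
  then show ?thesis unfolding rest_def by auto
qed

lemma set_enc:
  assumes v: "valid k L f" and m: "mark k L f i"
  shows "set (enc k L f i) \<subseteq> {1,2}"
proof -
  define p where "p = (i - 1) div 2"
  define e where "e = (i - 1) mod 2"
  have i1: "1 \<le> i" "i \<le> L" "i \<noteq> k" "2 \<le> f i"
    and P: "\<forall>j. 1 \<le> j \<and> j < i \<longrightarrow> \<not> (f j = 1 \<and> f (i - j) = 1)"
    using m unfolding mark_def by auto
  have vk: "1 \<le> k" "k \<le> L" "\<forall>q. 1 \<le> q \<and> q \<le> L \<longrightarrow> ok k q (f q)"
    using v unfolding valid_def by auto
  have ie: "i = 2 * p + e + 1" "e \<le> 1" using i1(1) unfolding p_def e_def by auto
  have oq: "ok k q (f q)" if "1 \<le> q" "q \<le> L" for q using vk(3) that by blast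
  define mid where "mid = (if e = 1 then nonone k (Suc p) (f (Suc p)) else [])"
  have e1: "enc k L f i = hdr p e @ concat (map (blk k f i) [1..<Suc p]) @ mid @ nonone k i (f i) @ rest k f (Suc i) L"
    unfolding enc_def p_def e_def mid_def by simp
  have h: "set (hdr p e) \<subseteq> {1,2}" using ie(2) unfolding hdr_def by auto
  have b: "set (concat (map (blk k f i) [1..<Suc p])) \<subseteq> {1,2}"
  proof -
    have "set (blk k f i j) \<subseteq> {1,2}" if "j \<in> set [1..<Suc p]" for j
    proof -
      have j2: "j < i - j" "1 \<le> j" "j \<le> L" "1 \<le> i - j" "i - j \<le> L" "j < i"
        using that ie i1 by auto
      have n: "\<not> (f j = 1 \<and> f (i - j) = 1)" using P j2 by blast
      show ?thesis by (rule set_blk[OF j2(1) oq[OF j2(2,3)] oq[OF j2(4,5)] n])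
    qed
    then show ?thesis by auto
  qed
  have md: "set mid \<subseteq> {1,2}"
  proof (cases "e = 1")
    case True
    have sp1: "1 \<le> Suc p" "Suc p \<le> L" "Suc p < i" "i - Suc p = Suc p" using ie True i1 by auto
    have "f (Suc p) \<noteq> 1" using P sp1 by auto
    then have "2 \<le> f (Suc p)" using ok_ge1[OF oq[OF sp1(1,2)]] by simp
    then show ?thesis unfolding mid_def using True set_nonone[OF oq[OF sp1(1,2)]] by simp
  qed (simp add: mid_def)
  have mk: "set (nonone k i (f i)) \<subseteq> {1,2}" by (rule set_nonone[OF oq[OF i1(1,2)] i1(4)])
  have r: "set (rest k f (Suc i) L) \<subseteq> {1,2}" by (rule set_rest) (use vk(3) i1 in auto)
  show ?thesis unfolding e1 using h b md mk r by simp
qed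

lemma encK_props:
  assumes v: "valid k L f"
  shows "set (rest k f 1 L) \<subseteq> {1,2}" "sum_list (rest k f 1 L) + 4 = sum f {1..L} + k"
proof -
  have a: "\<forall>q. 1 \<le> q \<and> q \<le> L \<longrightarrow> ok k q (f q)" using v unfolding valid_def by auto
  show "set (rest k f 1 L) \<subseteq> {1,2}" by (rule set_rest[OF a])
  show "sum_list (rest k f 1 L) + 4 = sum f {1..L} + k"
    using sum_rest[OF a] bud_total[OF v] by simp
qed

lemma encK_inj:
  assumes v: "valid k L f" "valid k L' f'" and eq: "rest k f 1 L = rest k f' 1 L'"
  shows "L = L' \<and> (\<forall>q. 1 \<le> q \<and> q \<le> L \<longrightarrow> f q = f' q)"
proof -
  have a: "\<forall>q. 1 \<le> q \<and> q \<le> L \<longrightarrow> ok k q (f q)" "1 \<le> k" "k \<le> L" using v(1) unfolding valid_def by auto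
  have a': "\<forall>q. 1 \<le> q \<and> q \<le> L' \<longrightarrow> ok k q (f' q)" "k \<le> L'" using v(2) unfolding valid_def by auto
  note rr = rest_inj[OF a(3) a'(2) a(1) a'(1) eq]
  have "1 \<le> L" using a by simp
  then show ?thesis using rr by blast
qed

lemma ns_facts:
  assumes "numerical_semigroup S"
  shows "0 \<in> S" "\<And>a b. a \<in> S \<Longrightarrow> b \<in> S \<Longrightarrow> a + b \<in> S" "finite (UNIV - S)"
  using assms unfolding numerical_semigroup_def by auto

lemma mult_in:
  assumes "numerical_semigroup S"
  shows "multiplicity S \<in> S" "multiplicity S \<noteq> 0" "\<And>x. 0 < x \<Longrightarrow> x < multiplicity S \<Longrightarrow> x \<notin> S"
proof -
  have ex: "\<exists>x. x \<in> S \<and> x \<noteq> 0"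
  proof (rule ccontr)
    assume "\<not> ?thesis"
    then have "UNIV - {0} \<subseteq> UNIV - S" by auto
    moreover have "infinite (UNIV - {0::nat})" by simp
    ultimately show False using ns_facts(3)[OF assms] finite_subset by blast
  qed
  show "multiplicity S \<in> S" "multiplicity S \<noteq> 0"
    using LeastI_ex[OF ex] unfolding multiplicity_def by auto
  show "x \<notin> S" if "0 < x" "x < multiplicity S" for x
    using not_less_Least[of x "\<lambda>x. x \<in> S \<and> x \<noteq> 0"] that unfolding multiplicity_def by auto
qed

lemma mult_mul_in:
  assumes "numerical_semigroup S" shows "t * multiplicity S \<in> S"
proof (induction t)
  case 0 then show ?case using ns_facts(1)[OF assms] by simp
next
  case (Suc t)
  then show ?case using ns_facts(2)[OF assms, of "multiplicity S" "t * multiplicity S"] mult_in(1)[OF assms]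
    by (simp add: add.commute)
qed

lemma frob_facts:
  assumes "numerical_semigroup S" "UNIV - S \<noteq> {}"
  shows "frobenius S \<notin> S" "\<And>x. frobenius S < x \<Longrightarrow> x \<in> S"
proof -
  have f: "finite (UNIV - S)" using ns_facts(3)[OF assms(1)] .
  show "frobenius S \<notin> S" using Max_in[OF f assms(2)] unfolding frobenius_def by auto
  show "x \<in> S" if "frobenius S < x" for x
  proof (rule ccontr)
    assume "x \<notin> S"
    then have "x \<le> Max (UNIV - S)" using Max_ge[OF f] by auto
    then show False using that unfolding frobenius_def by simp
  qed
qed

definition kz :: "nat set \<Rightarrow> nat \<Rightarrow> nat \<Rightarrow> nat" where
  "kz S m q = (if m + q \<in> S then 1 else if 2 * m + q \<in> S then 2 else 3)"

definition ISet :: "nat set \<Rightarrow> nat \<Rightarrow> nat set" where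
  "ISet S m = {i. 1 \<le> i \<and> i \<le> m - 1 \<and> 2 \<le> kz S m i \<and>
     (\<forall>j. 1 \<le> j \<and> j < i \<longrightarrow> \<not> (kz S m j = 1 \<and> kz S m (i - j) = 1))}"

locale csg =
  fixes S k g m
  assumes inC: "S \<in> C_set k g" and kpos: "0 < k" and mdef: "m = multiplicity S"
begin

lemma ns: "numerical_semigroup S" using inC unfolding C_set_def by auto
lemma gen: "genus S = g" using inC unfolding C_set_def by auto

lemma m_in: "m \<in> S" and m_pos: "0 < m" and below_m: "\<And>x. 0 < x \<Longrightarrow> x < m \<Longrightarrow> x \<notin> S"
  using mult_in[OF ns] mdef by auto

lemma add_in: "a \<in> S \<Longrightarrow> b \<in> S \<Longrightarrow> a + b \<in> S" using ns_facts(2)[OF ns] .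

lemma mul_in: "t * m \<in> S" using mult_mul_in[OF ns] mdef by simp

lemma F_eq: "frobenius S = 2 * m + k" and F_lt: "2 * m + k < 3 * m"
  using inC mdef unfolding C_set_def by auto

lemma k_lt_m: "k < m" using F_lt by simp

lemma nonempty: "UNIV - S \<noteq> {}"
proof
  assume "UNIV - S = {}"
  then have "1 \<in> S" by auto
  then have "m \<le> 1" using below_m[of 1] by (cases "m \<le> 1") auto
  then show False using k_lt_m kpos by simp
qed

lemma F_notin: "2 * m + k \<notin> S" using frob_facts(1)[OF ns nonempty] F_eq by simp
lemma above_F: "2 * m + k < x \<Longrightarrow> x \<in> S" using frob_facts(2)[OF ns nonempty] F_eq by simp

lemma mem_iff: "x \<in> S \<longleftrightarrow> (x mod m = 0 \<or> kz S m (x mod m) \<le> x div m)"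
proof -
  define q where "q = x mod m"
  define t where "t = x div m"
  have x: "x = t * m + q" unfolding q_def t_def by simp
  have qm: "q < m" unfolding q_def using m_pos by simp
  show ?thesis
  proof (cases "q = 0")
    case True
    then show ?thesis using mul_in x unfolding q_def[symmetric] by simp
  next
    case q0: False
    have "x \<in> S \<longleftrightarrow> kz S m q \<le> t"
    proof (cases "t \<le> 2")
      case True
      then consider "t = 0" | "t = 1" | "t = 2" by linarith
      then show ?thesis
      proof cases
        case 1
        then have "x \<notin> S" using below_m[of x] x qm q0 by simp
        then show ?thesis using 1 unfolding kz_def by simp
      next
        case 2
        then show ?thesis using x unfolding kz_def by (simp add: add.commute)
      next
        case 3
        have "m + q \<in> S \<Longrightarrow> 2 * m + q \<in> S"
        proof -
          assume "m + q \<in> S"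
          then have "m + (m + q) \<in> S" by (rule add_in[OF m_in])
          moreover have "m + (m + q) = 2 * m + q" by simp
          ultimately show ?thesis by simp
        qed
        then show ?thesis using 3 x unfolding kz_def by (auto simp: add.commute)
      qed
    next
      case False
      then have "3 * m \<le> t * m" by simp
      then have "2 * m + k < x" using x k_lt_m q0 by linarith
      then have "x \<in> S" by (rule above_F)
      moreover have "kz S m q \<le> 3" unfolding kz_def by simp
      ultimately show ?thesis using False by simp
    qed
    then show ?thesis using q0 unfolding q_def t_def by simp
  qed
qed


lemma kz_range: "kz S m q \<in> {1,2,3}" unfolding kz_def by simp

lemma gaps_eq: "UNIV - S = (\<Union>q\<in>{1..m-1}. (\<lambda>t. t * m + q) ` {..<kz S m q})"
proof
  show "UNIV - S \<subseteq> (\<Union>q\<in>{1..m-1}. (\<lambda>t. t * m + q) ` {..<kz S m q})"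
  proof
    fix x assume "x \<in> UNIV - S"
    then have "x mod m \<noteq> 0" "x div m < kz S m (x mod m)" using mem_iff by auto
    moreover have "x mod m < m" using m_pos by simp
    ultimately have "x mod m \<in> {1..m-1}" "x = (x div m) * m + x mod m" "x div m \<in> {..<kz S m (x mod m)}" by auto
    then show "x \<in> (\<Union>q\<in>{1..m-1}. (\<lambda>t. t * m + q) ` {..<kz S m q})" by blast
  qed
next
  show "(\<Union>q\<in>{1..m-1}. (\<lambda>t. t * m + q) ` {..<kz S m q}) \<subseteq> UNIV - S"
  proof
    fix x assume "x \<in> (\<Union>q\<in>{1..m-1}. (\<lambda>t. t * m + q) ` {..<kz S m q})"
    then obtain q t where q: "q \<in> {1..m-1}" "t < kz S m q" "x = t * m + q" by auto
    then have "q < m" by auto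
    then have "x mod m = q" "x div m = t" using q(3) m_pos by auto
    then show "x \<in> UNIV - S" using mem_iff q by auto
  qed
qed

lemma genus_sum: "g = sum (kz S m) {1..m-1}"
proof -
  have "g = card (UNIV - S)" using gen unfolding genus_def by simp
  also have "\<dots> = card (\<Union>q\<in>{1..m-1}. (\<lambda>t. t * m + q) ` {..<kz S m q})" unfolding gaps_eq ..
  also have "\<dots> = sum (\<lambda>q. card ((\<lambda>t. t * m + q) ` {..<kz S m q})) {1..m-1}"
  proof (rule card_UN_disjoint)
    show "\<forall>i\<in>{1..m-1}. \<forall>j\<in>{1..m-1}. i \<noteq> j \<longrightarrow>
      (\<lambda>t. t * m + i) ` {..<kz S m i} \<inter> (\<lambda>t. t * m + j) ` {..<kz S m j} = {}"
    proof (intro ballI impI)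
      fix i j assume ij: "i \<in> {1..m-1}" "j \<in> {1..m-1}" "i \<noteq> j"
      show "(\<lambda>t. t * m + i) ` {..<kz S m i} \<inter> (\<lambda>t. t * m + j) ` {..<kz S m j} = {}"
      proof (rule ccontr)
        assume "\<not> ?thesis"
        then obtain t u where "t * m + i = u * m + j" by auto
        then have "(t * m + i) mod m = (u * m + j) mod m" by simp
        moreover have "i < m" "j < m" using ij by auto
        ultimately have "i = j" by simp
        then show False using ij by simp
      qed
    qed
  qed auto
  also have "\<dots> = sum (kz S m) {1..m-1}"
  proof (rule sum.cong)
    fix q assume "q \<in> {1..m-1}"
    have "inj_on (\<lambda>t. t * m + q) {..<kz S m q}" using m_pos by (auto simp: inj_on_def)
    then show "card ((\<lambda>t. t * m + q) ` {..<kz S m q}) = kz S m q" by (simp add: card_image)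
  qed simp
  finally show ?thesis .
qed

lemma valid_kz: "valid k (m - 1) (kz S m)"
  unfolding valid_def
proof (intro conjI allI impI)
  show "1 \<le> k" using kpos by simp
  show "k \<le> m - 1" using k_lt_m by simp
  fix q assume q: "1 \<le> q \<and> q \<le> m - 1"
  show "ok k q (kz S m q)"
    unfolding ok_def
  proof (intro conjI impI)
    show "kz S m q \<in> {1,2,3}" by (rule kz_range)
    assume "k < q"
    then have "2 * m + q \<in> S" using above_F by simp
    then show "kz S m q \<in> {1,2}" unfolding kz_def by simp
  next
    assume qk: "q = k"
    have "m + k \<notin> S"
    proof
      assume "m + k \<in> S"
      then have "m + (m + k) \<in> S" by (rule add_in[OF m_in])
      moreover have "m + (m + k) = 2 * m + k" by simp
      ultimately show False using F_notin by simp
    qed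
    then show "kz S m q = 3" using F_notin qk unfolding kz_def by simp
  qed
qed



lemma mg_notsum: "x \<in> min_gens S \<Longrightarrow> a \<in> S \<Longrightarrow> b \<in> S \<Longrightarrow> a \<noteq> 0 \<Longrightarrow> b \<noteq> 0 \<Longrightarrow> x \<noteq> a + b"
  unfolding min_gens_def by blast

lemma mg_in: "x \<in> min_gens S \<Longrightarrow> x \<in> S \<and> x \<noteq> 0"
  unfolding min_gens_def by auto

lemma mg_bound: "min_gens S \<subseteq> {..3 * m + k}"
proof
  fix x assume x: "x \<in> min_gens S"
  show "x \<in> {..3 * m + k}"
  proof (rule ccontr)
    assume "x \<notin> {..3 * m + k}"
    then have "2 * m + k < x - m" by auto
    then have "x - m \<in> S" by (rule above_F)
    moreover have "x = m + (x - m)" "x - m \<noteq> 0" using \<open>2 * m + k < x - m\<close> by auto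
    ultimately show False using mg_notsum[OF x m_in \<open>x - m \<in> S\<close>] m_pos by auto
  qed
qed

lemma mg_fin: "finite (min_gens S)"
  using mg_bound finite_subset by blast

lemma mg_low: "min_gens S \<inter> {..<2 * m} = {m..2 * m - 1} \<inter> S"
proof
  show "min_gens S \<inter> {..<2 * m} \<subseteq> {m..2 * m - 1} \<inter> S"
  proof
    fix x assume "x \<in> min_gens S \<inter> {..<2 * m}"
    then have "x \<in> S" "x \<noteq> 0" "x < 2 * m" using mg_in by auto
    moreover have "m \<le> x" using below_m[of x] calculation by (cases "x < m") auto
    ultimately show "x \<in> {m..2 * m - 1} \<inter> S" by auto
  qed
next
  show "{m..2 * m - 1} \<inter> S \<subseteq> min_gens S \<inter> {..<2 * m}"
  proof
    fix x assume x: "x \<in> {m..2 * m - 1} \<inter> S"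
    then have xr: "m \<le> x" "x < 2 * m" "x \<in> S" using m_pos by auto
    have "x \<notin> {a + b |a b. a \<in> S - {0} \<and> b \<in> S - {0}}"
    proof
      assume "x \<in> {a + b |a b. a \<in> S - {0} \<and> b \<in> S - {0}}"
      then obtain a b where ab: "x = a + b" "a \<in> S" "b \<in> S" "a \<noteq> 0" "b \<noteq> 0" by auto
      have "m \<le> a" using below_m[of a] ab by (cases "a < m") auto
      moreover have "m \<le> b" using below_m[of b] ab by (cases "b < m") auto
      ultimately show False using ab xr by simp
    qed
    then show "x \<in> min_gens S \<inter> {..<2 * m}" unfolding min_gens_def using xr m_pos by auto
  qed
qed

definition M2 where "M2 = {x \<in> min_gens S. 2 * m \<le> x}"

lemma e2_eq: "e2 S = int (card M2)"
proof -
  have sp: "min_gens S = (min_gens S \<inter> {..<2 * m}) \<union> M2" unfolding M2_def by auto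
  have "card (min_gens S) = card (min_gens S \<inter> {..<2 * m}) + card M2"
    by (subst sp, rule card_Un_disjoint) (use mg_fin in \<open>auto simp: M2_def\<close>)
  then have "embdim S = e1 S + card M2"
    unfolding embdim_def e1_def mg_low mdef[symmetric] by simp
  then show ?thesis unfolding e2_def by simp
qed

lemma M2_prop:
  assumes x: "x \<in> M2"
  shows "x mod m \<in> ISet S m"
proof -
  have xm: "x \<in> min_gens S" "2 * m \<le> x" using x unfolding M2_def by auto
  have xs: "x \<in> S" "x \<noteq> 0" using mg_in[OF xm(1)] by auto
  define q where "q = x mod m"
  define t where "t = x div m"
  have xe: "x = t * m + q" unfolding q_def t_def by simp
  have qm: "q < m" unfolding q_def using m_pos by simp
  have t2: "2 \<le> t"
  proof (rule ccontr)
    assume "\<not> 2 \<le> t"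
    then have "t \<le> 1" by simp
    then have "t = 0 \<or> t = 1" by arith
    then have "x < 2 * m" using xe qm by auto
    then show False using xm by simp
  qed
  have tm: "(t - 1) * m \<in> S" "(t - 1) * m \<noteq> 0" using mul_in t2 m_pos by auto
  have q0: "q \<noteq> 0"
  proof
    assume "q = 0"
    then have "x = m + (t - 1) * m" using xe t2 by (simp add: algebra_simps)
    then show False using mg_notsum[OF xm(1) m_in tm(1)] m_pos tm(2) by simp
  qed
  have kz2: "2 \<le> kz S m q"
  proof (rule ccontr)
    assume "\<not> 2 \<le> kz S m q"
    then have "m + q \<in> S" unfolding kz_def by (simp split: if_splits)
    moreover have "x = (m + q) + (t - 1) * m" using xe t2
    proof -
      have "t * m = m + (t - 1) * m" using t2 by (cases t) auto
      then show ?thesis using xe by simp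
    qed
    ultimately show False using mg_notsum[OF xm(1) _ tm(1)] tm(2) m_pos by auto
  qed
  have P: "\<forall>j. 1 \<le> j \<and> j < q \<longrightarrow> \<not> (kz S m j = 1 \<and> kz S m (q - j) = 1)"
  proof (intro allI impI notI)
    fix j assume j: "1 \<le> j \<and> j < q" and kk: "kz S m j = 1 \<and> kz S m (q - j) = 1"
    have kz1: "kz S m r = 1 \<longleftrightarrow> m + r \<in> S" for r unfolding kz_def by simp
    have a: "m + j \<in> S" "m + (q - j) \<in> S" using kk kz1 by blast+
    have sum: "(m + j) + (m + (q - j)) = 2 * m + q" using j by simp
    show False
    proof (cases "t = 2")
      case True
      then have "x = (m + j) + (m + (q - j))" using xe sum by simp
      then show False using mg_notsum[OF xm(1) a(1) a(2)] m_pos by simp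
    next
      case False
      then have t3: "3 \<le> t" using t2 by simp
      have b: "2 * m + q \<in> S" using add_in[OF a(1) a(2)] unfolding sum .
      have c: "(t - 2) * m \<in> S" "(t - 2) * m \<noteq> 0" using mul_in t3 m_pos by auto
      define s where "s = t - 2"
      have ts: "t = s + 2" using t3 unfolding s_def by simp
      have "t * m = 2 * m + (t - 2) * m" unfolding s_def[symmetric] ts by (simp add: algebra_simps)
      then have "x = (2 * m + q) + (t - 2) * m" using xe by simp
      then show False using mg_notsum[OF xm(1) b c(1)] m_pos c(2) by simp
    qed
  qed
  show ?thesis unfolding ISet_def q_def[symmetric] using q0 qm kz2 P by auto
qed

lemma M2_inj: "inj_on (\<lambda>x. x mod m) M2"
proof (rule inj_onI)
  fix x y assume x: "x \<in> M2" and y: "y \<in> M2" and e: "x mod m = y mod m"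
  show "x = y"
  proof (rule ccontr)
    assume "x \<noteq> y"
    then have "x < y \<or> y < x" by auto
    then show False
    proof
      have main: "False" if a: "a \<in> M2" "b \<in> M2" "a mod m = b mod m" "a < b" for a b
      proof -
        have am: "a \<in> S" "a \<noteq> 0" using a(1) mg_in unfolding M2_def by auto
        have bm: "b \<in> min_gens S" using a(2) unfolding M2_def by auto
        have "m dvd (b - a)" using a(3,4) mod_eq_dvd_iff_nat[of a b m] by simp
        then obtain c where c: "b - a = m * c" by (auto simp: dvd_def)
        then have "b - a = c * m" by simp
        then have ba: "b - a \<in> S" using mul_in by simp
        have "b = a + (b - a)" "b - a \<noteq> 0" using a(4) by auto
        then show False using mg_notsum[OF bm am(1) ba am(2)] by simp
      qed
      show False if "x < y" using main[OF x y e that] .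
      show False if "y < x" using main[OF y x e[symmetric] that] .
    qed
  qed
qed

lemma ISet_fin: "finite (ISet S m)" unfolding ISet_def by (rule finite_subset[of _ "{..m}"]) auto

lemma e2_le: "e2 S \<le> int (card (ISet S m))"
proof -
  have "card M2 \<le> card (ISet S m)"
    by (rule card_inj_on_le[OF M2_inj]) (use M2_prop ISet_fin in auto)
  then show ?thesis using e2_eq by simp
qed


end

lemma S_eq:
  assumes "csg S k g m" "csg S' k g m" "\<forall>q. 1 \<le> q \<and> q \<le> m - 1 \<longrightarrow> kz S m q = kz S' m q"
  shows "S = S'"
proof
  have m0: "0 < m" using csg.m_pos[OF assms(1)] .
  have key: "x \<in> S \<longleftrightarrow> x \<in> S'" for x
  proof -
    have "x mod m < m" using m0 by simp
    then have "x mod m = 0 \<or> (1 \<le> x mod m \<and> x mod m \<le> m - 1)" by linarith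
    then have "(x mod m = 0 \<or> kz S m (x mod m) \<le> x div m) \<longleftrightarrow> (x mod m = 0 \<or> kz S' m (x mod m) \<le> x div m)"
      using assms(3) by auto
    then show ?thesis using csg.mem_iff[OF assms(1)] csg.mem_iff[OF assms(2)] by simp
  qed
  show "S \<subseteq> S'" using key by blast
  show "S' \<subseteq> S" using key by blast
qed

lemma fib_final:
  assumes "2 \<le> n"
  shows "fib (n - 4 + 1) + fib (n - 2 + 3) \<le> 2 * fib n + 1"
proof -
  have "n = 2 \<or> n = 3 \<or> 4 \<le> n" using assms by linarith
  then consider "n = 2" | "n = 3" | s where "n = Suc (Suc (Suc (Suc s)))"
  proof (elim disjE)
    assume "4 \<le> n"
    then have "n = Suc (Suc (Suc (Suc (n - 4))))" by simp
    then show ?thesis using that(3) by blast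
  qed (use that in auto)
  then show ?thesis
  proof cases
    case 1 then show ?thesis by (simp add: numeral_eq_Suc)
  next
    case 2 then show ?thesis by (simp add: numeral_eq_Suc)
  next
    case 3
    have "fib (Suc s) \<le> fib (Suc (Suc s))" by (rule fib_Suc_mono)
    then show ?thesis using 3 by (simp add: numeral_eq_Suc)
  qed
qed

theorem lemma4p2:
  fixes g k :: nat
  assumes "g > 0" and "k > 0"
  shows "(\<Sum>S\<in>C_set k g. e2 S) \<le> 2 * int (fib (g + k))"
proof -
  define C where "C = C_set k g"
  define mS where "mS = (\<lambda>S. multiplicity S)"
  have cs: "csg S k g (mS S)" if "S \<in> C" for S
    using that assms(2) unfolding C_def mS_def csg_def by simp
  have m2: "2 \<le> mS S" if "S \<in> C" for S
    using csg.k_lt_m[OF cs[OF that]] assms(2) by simp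
  have vS: "valid k (mS S - 1) (kz S (mS S))" if "S \<in> C" for S
    using csg.valid_kz[OF cs[OF that]] .
  have gS: "sum (kz S (mS S)) {1..mS S - 1} = g" if "S \<in> C" for S
    using csg.genus_sum[OF cs[OF that]] by simp
  define encC where "encC = (\<lambda>S. rest k (kz S (mS S)) 1 (mS S - 1))"
  have injC: "inj_on encC C"
  proof (rule inj_onI)
    fix S S' assume S: "S \<in> C" and S': "S' \<in> C" and e: "encC S = encC S'"
    have r: "mS S - 1 = mS S' - 1 \<and> (\<forall>q. 1 \<le> q \<and> q \<le> mS S - 1 \<longrightarrow> kz S (mS S) q = kz S' (mS S') q)"
      by (rule encK_inj[OF vS[OF S] vS[OF S'] e[unfolded encC_def]])
    have mm: "mS S = mS S'" using conjunct1[OF r] m2[OF S] m2[OF S'] by linarith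
    have c2: "csg S' k g (mS S)" using cs[OF S'] mm by simp
    show "S = S'" by (rule S_eq[OF cs[OF S] c2]) (use r mm in simp)
  qed
  have imC: "encC ` C \<subseteq> LS (g + k - 4)"
  proof
    fix xs assume "xs \<in> encC ` C"
    then obtain S where S: "S \<in> C" "xs = encC S" by auto
    have "set xs \<subseteq> {1,2}" "sum_list xs + 4 = g + k"
      using encK_props[OF vS[OF S(1)]] gS[OF S(1)] S(2) unfolding encC_def by simp_all
    then show "xs \<in> LS (g + k - 4)" unfolding LS_def by simp
  qed
  have finC: "finite C"
    using finite_imageD[OF finite_subset[OF imC finite_LS] injC] .
  have cardC: "card C \<le> fib (g + k - 4 + 1)"
  proof -
    have "card C = card (encC ` C)" using card_image[OF injC] by simp
    also have "\<dots> \<le> card (LS (g + k - 4))" by (rule card_mono[OF finite_LS imC])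
    finally show ?thesis using card_LS by simp
  qed
  define I where "I = (\<lambda>S. ISet S (mS S))"
  have finI: "finite (I S)" for S unfolding I_def ISet_def by (rule finite_subset[of _ "{..mS S}"]) auto
  have e2le: "e2 S \<le> int (card (I S))" if "S \<in> C" for S
    using csg.e2_le[OF cs[OF that]] unfolding I_def .
  have sum1: "(\<Sum>S\<in>C. e2 S) \<le> int (card (Sigma C I))"
  proof -
    have "(\<Sum>S\<in>C. e2 S) \<le> (\<Sum>S\<in>C. int (card (I S)))" by (rule sum_mono) (use e2le in auto)
    also have "\<dots> = int (\<Sum>S\<in>C. card (I S))" by simp
    also have "(\<Sum>S\<in>C. card (I S)) = card (Sigma C I)" using card_SigmaI[of C I] finC finI by simp
    finally show ?thesis .
  qed
  define A1 where "A1 = {p \<in> Sigma C I. snd p = k}"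
  define A2 where "A2 = {p \<in> Sigma C I. snd p \<noteq> k}"
  have finSig: "finite (Sigma C I)" using finC finI by auto
  have cardSig: "card (Sigma C I) \<le> card A1 + card A2"
  proof -
    have "Sigma C I = A1 \<union> A2" unfolding A1_def A2_def by auto
    then show ?thesis using card_Un_le by metis
  qed
  have cardA1: "card A1 \<le> card C"
  proof -
    have "inj_on fst A1" unfolding A1_def by (auto simp: inj_on_def prod_eq_iff)
    moreover have "fst ` A1 \<subseteq> C" unfolding A1_def by auto
    ultimately show ?thesis using card_inj_on_le finC by blast
  qed
  define encA where "encA = (\<lambda>p. enc k (mS (fst p) - 1) (kz (fst p) (mS (fst p))) (snd p))"
  have mk: "mark k (mS S - 1) (kz S (mS S)) i" if "(S, i) \<in> A2" for S i
    using that unfolding A2_def I_def ISet_def mark_def by auto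
  have inA2: "S \<in> C" if "(S, i) \<in> A2" for S i using that unfolding A2_def by auto
  have injA: "inj_on encA A2"
  proof (rule inj_onI)
    fix p p' assume p: "p \<in> A2" and p': "p' \<in> A2" and e: "encA p = encA p'"
    obtain S i where pe: "p = (S, i)" by (cases p)
    obtain S' i' where pe': "p' = (S', i')" by (cases p')
    have S: "S \<in> C" and S': "S' \<in> C" using inA2 p p' pe pe' by auto
    have r: "i = i' \<and> mS S - 1 = mS S' - 1 \<and> (\<forall>q. 1 \<le> q \<and> q \<le> mS S - 1 \<longrightarrow> kz S (mS S) q = kz S' (mS S') q)"
      by (rule enc_inj[OF vS[OF S] vS[OF S'] mk[of S i] mk[of S' i']]) (use p p' pe pe' e in \<open>auto simp: encA_def\<close>)
    have mm: "mS S = mS S'" using conjunct1[OF conjunct2[OF r]] m2[OF S] m2[OF S'] by linarith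
    have c2: "csg S' k g (mS S)" using cs[OF S'] mm by simp
    have "S = S'" by (rule S_eq[OF cs[OF S] c2]) (use r mm in simp)
    then show "p = p'" using pe pe' r by simp
  qed
  have imA: "encA ` A2 \<subseteq> LE (g + k - 2)"
  proof
    fix xs assume "xs \<in> encA ` A2"
    then obtain S i where Si: "(S, i) \<in> A2" "xs = encA (S, i)" by auto
    have S: "S \<in> C" using inA2[OF Si(1)] .
    have "set xs \<subseteq> {1,2}" using set_enc[OF vS[OF S] mk[OF Si(1)]] Si(2) unfolding encA_def by simp
    moreover have "sum_list xs + 2 \<le> g + k"
      using enc_weight[OF vS[OF S] mk[OF Si(1)]] gS[OF S] Si(2) unfolding encA_def by simp
    ultimately show "xs \<in> LE (g + k - 2)" unfolding LE_def by simp
  qed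
  have cardA2: "card A2 + 1 \<le> fib (g + k - 2 + 3)"
  proof -
    have "card A2 = card (encA ` A2)" using card_image[OF injA] by simp
    also have "\<dots> \<le> card (LE (g + k - 2))" by (rule card_mono[OF finite_LE imA])
    finally show ?thesis using card_LE[of "g + k - 2"] by simp
  qed
  have ff: "fib (g + k - 4 + 1) + fib (g + k - 2 + 3) \<le> 2 * fib (g + k) + 1"
    by (rule fib_final) (use assms in simp)
  have "card (Sigma C I) \<le> 2 * fib (g + k)"
    using cardSig cardA1 cardC cardA2 ff by linarith
  then have "int (card (Sigma C I)) \<le> 2 * int (fib (g + k))" by linarith
  then show ?thesis using sum1 unfolding C_def by linarith
qed

end
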